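(* Let $n\ge q\ge 2$ be integers and put $S_1=\sqrt{q^2+4(q-1)(n-2)}$. Let $d$ be an integer and define $j$ by $d=n-1-\frac{n-2+j}{q}$, with $j\in\left[0,\frac{S_1-q}{2}\right)$. Put $s=1-\frac{2d}{n}$, $d_0=n-\frac{j(n-1)}{q(j+q-1)}$, let $e$ be the unique rational number in $(0,1]$ with $d_0+e\in\mathbb{Z}$, and let $$f(t)=\Big(t+1+\tfrac{2e}{n}-\tfrac{2j(n-1)}{nq(j+q-1)}\Big)\Big(t+1+\tfrac{2(e-1)}{n}-\tfrac{2j(n-1)}{nq(j+q-1)}\Big)(t-s)=\sum_{i=0}^3 f_iQ_i^{(n,q)}(t).$$ Let $(\mu_d^*,\mu_{d_0+e-1}^*,\mu_{d_0+e}^* )$ be the unique solution of the linear system $$\mu_d^*\frac{K_l^{(n,q)}(d)}{r_l}+\mu_{d_0+e-1}^*\frac{K_l^{(n,q)}(d_0+e-1)}{r_l}+\mu_{d_0+e}^*\frac{K_l^{(n,q)}(d_0+e)}{r_l}=-1,\qquad l=1,2,3,$$ and for $i=4,5,\dots,n$ set $$\lambda_i^*=1+\mu_d^*\frac{K_i^{(n,q)}(d)}{r_i}+\mu_{d_0+e-1}^*\frac{K_i^{(n,q)}(d_0+e-1)}{r_i}+\mu_{d_0+e}^*\frac{K_i^{(n,q)}(d_0+e)}{r_i}.$$ If $\lambda_i^*\ge 0$ for every integer $i\in[4,n]$, then the bound $A_q(n,s)\le f(1)/f_0$ is the best bound obtainable by the linear programming method: for every real polynomial $h(t)=\sum_{i=0}^{m}h_iQ_i^{(n,q)}(t)$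 of degree $m\le n$ with $h_0>0$, $h_i\ge 0$ for all $i$, and $h(t)\le 0$ for all $t\in T_n\cap[-1,s]$, one has $h(1)/h_0\ge f(1)/f_0$.
   Context: $K_i^{(n,q)}(z)=\sum_{l=0}^{i}(-1)^l(q-1)^{i-l}\binom{z}{l}\binom{n-z}{i-l}$, $r_i=(q-1)^i\binom{n}{i}$, and $Q_i^{(n,q)}(t)=\frac{1}{r_i}K_i^{(n,q)}\!\big(\tfrac{n(1-t)}{2}\big)$. $T_n=\{-1+\frac{2i}{n}: i=0,1,\dots,n\}$. $A_q(n,s)$ is the maximum size of a code in the $q$-ary Hamming space of length $n$ with all pairwise inner products $1-\frac{2d(x,y)}{n}\le s$; the linear programming (Delsarte) bound states $A_q(n,s)\le h(1)/h_0$ for any $h$ as in the claim. *)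

theory Defs
  imports Complex_Main
begin

text \<open>Krawtchouk polynomial K_i^{(n,q)}(z), with real argument z (binomials are
  generalised binomial coefficients, so K_i is the usual polynomial in z).\<close>
definition kraw :: "nat \<Rightarrow> nat \<Rightarrow> nat \<Rightarrow> real \<Rightarrow> real" where
  "kraw n q i z = (\<Sum>l=0..i. (-1)^l * (real q - 1)^(i-l) * (z gchoose l)
                               * ((real n - z) gchoose (i-l)))"

definition rr :: "nat \<Rightarrow> nat \<Rightarrow> nat \<Rightarrow> real" where
  "rr n q i = (real q - 1)^i * real (n choose i)"

definition QQ :: "nat \<Rightarrow> nat \<Rightarrow> nat \<Rightarrow> real \<Rightarrow> real" where
  "QQ n q i t = kraw n q i (real n * (1 - t) / 2) / rr n q i"

definition Tn :: "nat \<Rightarrow> real set" where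
  "Tn n = {-1 + 2 * real i / real n | i. i \<le> n}"

definition Qcoeff :: "nat \<Rightarrow> nat \<Rightarrow> nat \<Rightarrow> (real \<Rightarrow> real) \<Rightarrow> nat \<Rightarrow> real" where
  "Qcoeff n q m f k = (THE c. \<exists>fs. fs k = c \<and> (\<forall>t. f t = (\<Sum>i\<le>m. fs i * QQ n q i t)))"

end

theory Submission
  imports Defs
begin

definition "kk1 N Q x = (Q-1)*(N-x) - (x::real)"
definition "kk2 N Q x = (Q-1)^2*((N-x)*(N-x-1)/2) - (Q-1)*x*(N-x) + x*(x-1)/(2::real)"
definition "kk3 N Q x = (Q-1)^3*((N-x)*(N-x-1)*(N-x-2)/6) - (Q-1)^2*x*((N-x)*(N-x-1)/2)
   + (Q-1)*(x*(x-1)/2)*(N-x) - x*(x-1)*(x-2)/(6::real)"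

lemma kraw1: "kraw n q 1 z = kk1 (real n) (real q) z"
  by (simp add: kraw_def kk1_def)
lemma kraw2: "kraw n q 2 z = kk2 (real n) (real q) z"
  unfolding kk2_def
  apply (simp add: kraw_def numeral_eq_Suc gbinomial_Suc atLeast0_atMost_Suc gbinomial_prod_rev)
  by (simp add: field_simps)
lemma kraw3: "kraw n q 3 z = kk3 (real n) (real q) z"
  unfolding kk3_def
  by (simp add: kraw_def numeral_eq_Suc gbinomial_Suc atLeast0_atMost_Suc gbinomial_prod_rev)

lemma kraw_0: "kraw n q 0 z = 1" by (simp add: kraw_def)
lemma rr_0: "rr n q 0 = 1" by (simp add: rr_def)

lemma kraw_at0: "kraw n q i 0 = rr n q i"
proof -
  have "kraw n q i 0 = (\<Sum>l\<in>{0..i}. (if l = 0 then (real q - 1)^i * (real n gchoose i) else 0))"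
    unfolding kraw_def by (intro sum.cong) (auto simp: gbinomial_0_left)
  also have "\<dots> = (real q - 1)^i * (real n gchoose i)" by (simp add: sum.delta)
  finally show ?thesis by (simp add: rr_def binomial_gbinomial)
qed

lemma rr_pos: "2 \<le> q \<Longrightarrow> i \<le> n \<Longrightarrow> rr n q i > 0"
  unfolding rr_def by (auto intro!: mult_pos_pos)

definition "mm1 N Q = N*(Q-1)/(Q::real)"
definition "mm2 N Q = N*(Q-1)/Q*(1 + (N-1)*(Q-1)/(Q::real))"
definition "mm3 N Q = N*(Q-1)/Q*(1 + 3*(N-1)*(Q-1)/Q + (N-1)*(N-2)*((Q-1)/Q)^2)"

lemma kk2_poly: "kk2 N Q x = Q^2/2 * x^2 + ((Q^2-2*Q)/2 + N*Q - N*Q^2) * x + (Q-1)^2*N*(N-1)/2"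
  unfolding kk2_def by (simp add: field_simps power2_eq_square)
lemma kk3_poly: "kk3 N Q x = -(Q^3/6) * x^3 + (Q^2 - Q^3/2 + N*(Q^3-Q^2)/2) * x^2
   + (-Q + Q^2 - Q^3/3 + N*(3*Q/2 - 5*Q^2/2 + Q^3) + N^2*(-Q/2 + Q^2 - Q^3/2)) * x
   + (Q-1)^3*N*(N-1)*(N-2)/6"
  unfolding kk3_def by (simp add: field_simps power2_eq_square power3_eq_cube)

lemma moments:
  fixes N Q m1 m2 m3 c a b :: real
  assumes Q: "Q \<noteq> 0"
    and h1: "m1 * kk1 N Q c + m2 * kk1 N Q a + m3 * kk1 N Q b = - kk1 N Q 0"
    and h2: "m1 * kk2 N Q c + m2 * kk2 N Q a + m3 * kk2 N Q b = - kk2 N Q 0"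
    and h3: "m1 * kk3 N Q c + m2 * kk3 N Q a + m3 * kk3 N Q b = - kk3 N Q 0"
  defines "S0 \<equiv> 1 + m1 + m2 + m3"
    and "S1 \<equiv> m1*c + m2*a + m3*b"
    and "S2 \<equiv> m1*c^2 + m2*a^2 + m3*b^2"
    and "S3 \<equiv> m1*c^3 + m2*a^3 + m3*b^3"
  shows "S1 = mm1 N Q * S0 \<and> S2 = mm2 N Q * S0 \<and> S3 = mm3 N Q * S0"
proof -
  have e1: "(Q-1)*N*S0 - Q*S1 = 0"
    using h1 unfolding kk1_def S0_def S1_def by (simp add: algebra_simps)
  hence E1: "S1 = mm1 N Q * S0" using Q unfolding mm1_def by (simp add: field_simps)
  define k21 where "k21 = (Q^2-2*Q)/2 + N*Q - N*Q^2"
  define k20 where "k20 = (Q-1)^2*N*(N-1)/2"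
  have e2: "Q^2/2 * S2 + k21 * S1 + k20 * S0 = 0"
    using h2 unfolding kk2_poly S0_def S1_def S2_def k21_def[symmetric] k20_def[symmetric]
    by (simp add: algebra_simps)
  have z2: "Q^2/2 * mm2 N Q + k21 * mm1 N Q + k20 = 0"
    using Q unfolding mm1_def mm2_def k21_def k20_def by (simp add: field_simps power2_eq_square)
  have E2: "S2 = mm2 N Q * S0"
  proof -
    have "Q^2/2 * (S2 - mm2 N Q * S0) = (Q^2/2 * S2 + k21 * S1 + k20 * S0) - S0 * (Q^2/2 * mm2 N Q + k21 * mm1 N Q + k20)"
      using E1 by (simp add: field_simps)
    hence "Q^2/2 * (S2 - mm2 N Q * S0) = 0" using e2 z2 by simp
    thus ?thesis using Q by simp
  qed
  define k32 where "k32 = Q^2 - Q^3/2 + N*(Q^3-Q^2)/2"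
  define k31 where "k31 = -Q + Q^2 - Q^3/3 + N*(3*Q/2 - 5*Q^2/2 + Q^3) + N^2*(-Q/2 + Q^2 - Q^3/2)"
  define k30 where "k30 = (Q-1)^3*N*(N-1)*(N-2)/6"
  have e3: "-(Q^3/6) * S3 + k32 * S2 + k31 * S1 + k30 * S0 = 0"
    using h3 unfolding kk3_poly S0_def S1_def S2_def S3_def k32_def[symmetric] k31_def[symmetric] k30_def[symmetric]
    by (simp add: algebra_simps)
  have z3: "-(Q^3/6) * mm3 N Q + k32 * mm2 N Q + k31 * mm1 N Q + k30 = 0"
    using Q unfolding mm1_def mm2_def mm3_def k32_def k31_def k30_def
    by (simp add: field_simps power2_eq_square power3_eq_cube)
  have E3: "S3 = mm3 N Q * S0"
  proof -
    have "-(Q^3/6) * (S3 - mm3 N Q * S0) = 0"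
    proof -
      have "-(Q^3/6) * (S3 - mm3 N Q * S0) = (-(Q^3/6) * S3 + k32 * S2 + k31 * S1 + k30 * S0)
          - S0 * (-(Q^3/6) * mm3 N Q + k32 * mm2 N Q + k31 * mm1 N Q + k30)"
        using E1 E2 by (simp add: field_simps)
      thus ?thesis using e3 z3 by simp
    qed
    thus ?thesis using Q by simp
  qed
  show ?thesis using E1 E2 E3 by blast
qed

lemma conseq:
  fixes u1 u2 u3 c a b M1 M2 M3 :: real
  defines "S0 \<equiv> 1 + u1 + u2 + u3"
  assumes E1: "u1*c + u2*a + u3*b = M1 * S0"
    and E2: "u1*c^2 + u2*a^2 + u3*b^2 = M2 * S0"
    and E3: "u1*c^3 + u2*a^3 + u3*b^3 = M3 * S0"
  shows "u1*(c*(c-a)*(c-b)) = S0*(M3 - (a+b)*M2 + a*b*M1)"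
    and "u2*(a*(a-c)*(a-b)) = S0*(M3 - (c+b)*M2 + c*b*M1)"
    and "u3*(b*(b-c)*(b-a)) = S0*(M3 - (c+a)*M2 + c*a*M1)"
    and "-(c*a*b) = S0*(M3 - (a+b+c)*M2 + (a*b+b*c+c*a)*M1 - c*a*b)"
proof -
  have i1: "u1*(c*(c-a)*(c-b)) = (u1*c^3 + u2*a^3 + u3*b^3) - (a+b)*(u1*c^2 + u2*a^2 + u3*b^2) + a*b*(u1*c + u2*a + u3*b)"
    by (simp add: algebra_simps power2_eq_square power3_eq_cube)
  show "u1*(c*(c-a)*(c-b)) = S0*(M3 - (a+b)*M2 + a*b*M1)"
    unfolding i1 E1 E2 E3 by (simp add: algebra_simps)
  have i2: "u2*(a*(a-c)*(a-b)) = (u1*c^3 + u2*a^3 + u3*b^3) - (c+b)*(u1*c^2 + u2*a^2 + u3*b^2) + c*b*(u1*c + u2*a + u3*b)"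
    by (simp add: algebra_simps power2_eq_square power3_eq_cube)
  show "u2*(a*(a-c)*(a-b)) = S0*(M3 - (c+b)*M2 + c*b*M1)"
    unfolding i2 E1 E2 E3 by (simp add: algebra_simps)
  have i3: "u3*(b*(b-c)*(b-a)) = (u1*c^3 + u2*a^3 + u3*b^3) - (c+a)*(u1*c^2 + u2*a^2 + u3*b^2) + c*a*(u1*c + u2*a + u3*b)"
    by (simp add: algebra_simps power2_eq_square power3_eq_cube)
  show "u3*(b*(b-c)*(b-a)) = S0*(M3 - (c+a)*M2 + c*a*M1)"
    unfolding i3 E1 E2 E3 by (simp add: algebra_simps)
  have i4: "-(c*a*b) = (u1*c^3 + u2*a^3 + u3*b^3) - (a+b+c)*(u1*c^2 + u2*a^2 + u3*b^2) + (a*b+b*c+c*a)*(u1*c + u2*a + u3*b) - c*a*b*S0"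
    unfolding S0_def by (simp add: algebra_simps power2_eq_square power3_eq_cube)
  show "-(c*a*b) = S0*(M3 - (a+b+c)*M2 + (a*b+b*c+c*a)*M1 - c*a*b)"
    unfolding i4 E1 E2 E3 by (simp add: algebra_simps)
qed

definition "EFg m1 m2 m3 c x = m3 - (2*x+1+c)*m2 + (x*(x+1) + c*(2*x+1))*m1 - c*x*(x+(1::real))"

lemma EF_scaled:
  fixes Q D M1 M2 M3 C X :: real
  assumes "Q \<noteq> 0" "D \<noteq> 0"
  shows "EFg (M1/Q) (M2/Q^2) (M3/Q^3) (C/Q) (X/(Q*D)) * (Q^3*(Q*D)^2)
    = M3*(Q*D)^2 - M2*(Q*(Q*D)*(2*X+Q*D) + (Q*D)^2*C) + M1*Q^2*(X*(X+Q*D) + C*D*(2*X+Q*D)) - C*Q^2*X*(X+Q*D)"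
  using assms unfolding EFg_def by (simp add: field_simps power2_eq_square power3_eq_cube)

lemma EF_convex:
  "EFg m1 m2 m3 c (x+e) = (1-e)*EFg m1 m2 m3 c x + e*EFg m1 m2 m3 c (x+1) - (m1 - c)*e*(1-e)"
  unfolding EFg_def by (simp add: algebra_simps power2_eq_square)

lemma mm_scaled:
  assumes "Q \<noteq> 0"
  shows "mm1 N Q = (N*(Q-1))/Q"
    and "mm2 N Q = (N*(Q-1)*(Q + (N-1)*(Q-1)))/Q^2"
    and "mm3 N Q = (N*(Q-1)*(Q^2 + 3*(N-1)*(Q-1)*Q + (N-1)*(N-2)*(Q-1)^2))/Q^3"
  using assms unfolding mm1_def mm2_def mm3_def by (simp_all add: field_simps power2_eq_square power3_eq_cube)

lemma EF_neg_k:
  fixes N Q j k :: real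
  assumes Q: "Q \<ge> 2" and j: "j \<ge> 0" and W: "j*(j+Q) < (Q-1)*(N-2)" and NQ: "N \<ge> Q"
    and k: "k = 0 \<or> k = 1"
  shows "EFg (mm1 N Q) (mm2 N Q) (mm3 N Q) (N - 1 - (N-2+j)/Q) (N - j*(N-1)/(Q*(j+Q-1)) - k) < 0"
proof -
  define D where "D = j+Q-1"
  have Q0: "Q \<noteq> 0" and D0: "D > 0" using Q j by (auto simp: D_def)
  define C where "C = (N-1)*Q - (N-2+j)"
  define X where "X = N*Q*D - j*(N-1) - k*Q*D"
  define M1 where "M1 = N*(Q-1)"
  define M2 where "M2 = N*(Q-1)*(Q + (N-1)*(Q-1))"
  define M3 where "M3 = N*(Q-1)*(Q^2 + 3*(N-1)*(Q-1)*Q + (N-1)*(N-2)*(Q-1)^2)"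
  have c: "N - 1 - (N-2+j)/Q = C/Q" using Q0 unfolding C_def by (simp add: field_simps)
  have D0n: "D \<noteq> 0" using D0 by simp
  have QD: "Q*D \<noteq> 0" using Q0 D0 by simp
  have x: "N - j*(N-1)/(Q*(j+Q-1)) - k = X/(Q*D)"
    unfolding X_def D_def[symmetric] using QD by (simp add: field_simps)
  have m: "mm1 N Q = M1/Q" "mm2 N Q = M2/Q^2" "mm3 N Q = M3/Q^3"
    using mm_scaled[OF Q0] unfolding M1_def M2_def M3_def by simp_all
  define W' where "W' = (Q-1)*N - 2*(Q-1) - j*(j+Q)"
  have Wp: "W' > 0" using W unfolding W'_def by (simp add: algebra_simps)
  define s where "s = Q - 2"
  have s0: "s \<ge> 0" using Q by (simp add: s_def)
  have Qs: "Q = s + 2" by (simp add: s_def)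
  have N0: "N \<ge> 0" using Q NQ by simp
  have key: "EFg (mm1 N Q) (mm2 N Q) (mm3 N Q) (N - 1 - (N-2+j)/Q) (N - j*(N-1)/(Q*(j+Q-1)) - k) * (Q^3*(Q*D)^2) < 0"
    using k
  proof
    assume k0: "k = 0"
    have poly: "M3*(Q*D)^2 - M2*(Q*(Q*D)*(2*X+Q*D) + (Q*D)^2*C) + M1*Q^2*(X*(X+Q*D) + C*D*(2*X+Q*D)) - C*Q^2*X*(X+Q*D)
      = Q^2 * ((-(Q-1)*(Q+j)*N - 3*Q*(Q-1) - j*(5*Q-1) - 2*j^2) * W'
         - (12 + 30*j + 26*j^2 + 10*j^3 + 2*j^4 + 30*s + 50*s*j + 26*s*j^2 + 6*s*j^3 + 24*s^2 + 22*s^2*j + 6*s^2*j^2 + 6*s^3 + 2*s^3*j))"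
      unfolding M1_def M2_def M3_def C_def X_def D_def W'_def k0 s_def by algebra
    have A: "-(Q-1)*(Q+j)*N - 3*Q*(Q-1) - j*(5*Q-1) - 2*j^2 < 0"
    proof -
      have "(Q-1)*(Q+j)*N \<ge> 0" using Q j N0 by simp
      moreover have "j*(5*Q-1) \<ge> 0" using Q j by simp
      moreover have "3*Q*(Q-1) > 0" using Q by simp
      moreover have "-(Q-1)*(Q+j)*N = -((Q-1)*(Q+j)*N)" by (simp add: algebra_simps)
      moreover have "j^2 \<ge> 0" by simp
      ultimately show ?thesis by linarith
    qed
    have R: "0 \<le> 12 + 30*j + 26*j^2 + 10*j^3 + 2*j^4 + 30*s + 50*s*j + 26*s*j^2 + 6*s*j^3 + 24*s^2 + 22*s^2*j + 6*s^2*j^2 + 6*s^3 + 2*s^3*j"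
      using s0 j by (intro add_nonneg_nonneg mult_nonneg_nonneg zero_le_power) simp_all
    have "(-(Q-1)*(Q+j)*N - 3*Q*(Q-1) - j*(5*Q-1) - 2*j^2) * W' < 0"
      using A Wp by (simp add: mult_neg_pos)
    hence "Q^2 * ((-(Q-1)*(Q+j)*N - 3*Q*(Q-1) - j*(5*Q-1) - 2*j^2) * W'
         - (12 + 30*j + 26*j^2 + 10*j^3 + 2*j^4 + 30*s + 50*s*j + 26*s*j^2 + 6*s*j^3 + 24*s^2 + 22*s^2*j + 6*s^2*j^2 + 6*s^3 + 2*s^3*j)) < 0"
      using R Q0 by (intro mult_pos_neg) auto
    thus ?thesis unfolding c x m EF_scaled[OF Q0 D0n] poly .
  next
    assume k1: "k = 1"
    have poly: "M3*(Q*D)^2 - M2*(Q*(Q*D)*(2*X+Q*D) + (Q*D)^2*C) + M1*Q^2*(X*(X+Q*D) + C*D*(2*X+Q*D)) - C*Q^2*X*(X+Q*D)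
      = Q^2 * ((-(Q-1)*(Q+j)*N - Q*(Q-1) - j*(3*Q-1) - 2*j^2) * W'
         - (4 + 14*j + 18*j^2 + 10*j^3 + 2*j^4 + 10*s + 26*s*j + 22*s*j^2 + 6*s*j^3 + 8*s^2 + 14*s^2*j + 6*s^2*j^2 + 2*s^3 + 2*s^3*j))"
      unfolding M1_def M2_def M3_def C_def X_def D_def W'_def k1 s_def by algebra
    have A: "-(Q-1)*(Q+j)*N - Q*(Q-1) - j*(3*Q-1) - 2*j^2 < 0"
    proof -
      have "(Q-1)*(Q+j)*N \<ge> 0" using Q j N0 by simp
      moreover have "j*(3*Q-1) \<ge> 0" using Q j by simp
      moreover have "Q*(Q-1) > 0" using Q by simp
      moreover have "-(Q-1)*(Q+j)*N = -((Q-1)*(Q+j)*N)" by (simp add: algebra_simps)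
      moreover have "j^2 \<ge> 0" by simp
      ultimately show ?thesis by linarith
    qed
    have R: "0 \<le> 4 + 14*j + 18*j^2 + 10*j^3 + 2*j^4 + 10*s + 26*s*j + 22*s*j^2 + 6*s*j^3 + 8*s^2 + 14*s^2*j + 6*s^2*j^2 + 2*s^3 + 2*s^3*j"
      using s0 j by (intro add_nonneg_nonneg mult_nonneg_nonneg zero_le_power) simp_all
    have "(-(Q-1)*(Q+j)*N - Q*(Q-1) - j*(3*Q-1) - 2*j^2) * W' < 0"
      using A Wp by (simp add: mult_neg_pos)
    hence "Q^2 * ((-(Q-1)*(Q+j)*N - Q*(Q-1) - j*(3*Q-1) - 2*j^2) * W'
         - (4 + 14*j + 18*j^2 + 10*j^3 + 2*j^4 + 10*s + 26*s*j + 22*s*j^2 + 6*s*j^3 + 8*s^2 + 14*s^2*j + 6*s^2*j^2 + 2*s^3 + 2*s^3*j)) < 0"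
      using R Q0 by (intro mult_pos_neg) auto
    thus ?thesis unfolding c x m EF_scaled[OF Q0 D0n] poly .
  qed
  have pos: "Q^3*(Q*D)^2 > 0" using Q D0 by simp
  show ?thesis
  proof (rule ccontr)
    assume "\<not> ?thesis"
    hence "EFg (mm1 N Q) (mm2 N Q) (mm3 N Q) (N - 1 - (N-2+j)/Q) (N - j*(N-1)/(Q*(j+Q-1)) - k) * (Q^3*(Q*D)^2) \<ge> 0"
      using pos by simp
    thus False using key by linarith
  qed
qed

lemma Ec_nonneg:
  fixes N Q x :: real
  assumes Q: "Q \<ge> 2" and NQ: "N \<ge> Q"
  shows "mm3 N Q - (2*x+1)*mm2 N Q + x*(x+1)*mm1 N Q \<ge> 0"
proof -
  have Q0: "Q \<noteq> 0" using Q by simp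
  have id: "mm3 N Q - (2*x+1)*mm2 N Q + x*(x+1)*mm1 N Q
      = mm1 N Q * ((x - (N-1)*(Q-1)/Q - 1/2)^2 + (4*(N-1)*(Q-1) - Q^2)/(4*Q^2))"
    using Q0 unfolding mm1_def mm2_def mm3_def by (simp add: field_simps power2_eq_square)
  have "4*(N-1)*(Q-1) \<ge> 4*(Q-1)*(Q-1)" using Q NQ by (simp add: mult_right_mono)
  moreover have "4*(Q-1)*(Q-1) - Q^2 = (Q-2)*(3*Q-2)" by (simp add: algebra_simps power2_eq_square)
  moreover have "(Q-2)*(3*Q-2) \<ge> 0" using Q by simp
  ultimately have "4*(N-1)*(Q-1) - Q^2 \<ge> 0" by linarith
  hence "(x - (N-1)*(Q-1)/Q - 1/2)^2 + (4*(N-1)*(Q-1) - Q^2)/(4*Q^2) \<ge> 0" by simp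
  moreover have "mm1 N Q \<ge> 0" using Q NQ unfolding mm1_def by simp
  ultimately show ?thesis unfolding id by simp
qed

lemma d0_aux: fixes M1 M2 M3 C X D Q :: real assumes Q0: "Q \<noteq> 0" and Dn: "D \<noteq> 0" and poly: "(M3 - C*M2)*D = X*(M2 - C*M1)"
  shows "M3/Q^3 - C/Q*(M2/Q^2) = X/(Q*D)*(M2/Q^2 - C/Q*(M1/Q))"
proof -
    have e1: "C/Q*(M2/Q^2) = C*M2/Q^3" by (simp add: power2_eq_square power3_eq_cube)
    have "M3/Q^3 - C/Q*(M2/Q^2) = (M3 - C*M2)/Q^3" unfolding e1 by (simp add: diff_divide_distrib)
    also have "\<dots> = (M3 - C*M2)*D / (Q^3*D)" using Dn by simp
    also have "\<dots> = X*(M2 - C*M1)/(Q^3*D)" by (simp add: poly)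
    also have "\<dots> = X/(Q*D)*((M2 - C*M1)/Q^2)" using Q0 Dn by (simp add: power2_eq_square power3_eq_cube)
    also have "(M2 - C*M1)/Q^2 = M2/Q^2 - C/Q*(M1/Q)" by (simp add: power2_eq_square diff_divide_distrib)
    finally show ?thesis .
qed

lemma d0_poly: fixes N Q j :: real shows "(N*(Q-1)*(Q^2 + 3*(N-1)*(Q-1)*Q + (N-1)*(N-2)*(Q-1)^2) - ((N-1)*Q - (N-2+j))*(N*(Q-1)*(Q + (N-1)*(Q-1))))*(j+Q-1)
   = (N*Q*(j+Q-1) - j*(N-1))*(N*(Q-1)*(Q + (N-1)*(Q-1)) - ((N-1)*Q - (N-2+j))*(N*(Q-1)))"
  by algebra

lemma d0_id: fixes N Q j :: real assumes Q0: "Q \<noteq> 0" and Dn: "j+Q-1 \<noteq> 0"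
  shows "mm3 N Q - (N-1-(N-2+j)/Q)*mm2 N Q = (N - j*(N-1)/(Q*(j+Q-1)))*(mm2 N Q - (N-1-(N-2+j)/Q)*mm1 N Q)"
proof -
  have QD: "Q*(j+Q-1) \<noteq> 0" using Q0 Dn by simp
  have cc: "N-1-(N-2+j)/Q = ((N-1)*Q - (N-2+j))/Q" using Q0 by (simp add: field_simps)
  have dd: "N - j*(N-1)/(Q*(j+Q-1)) = (N*Q*(j+Q-1) - j*(N-1))/(Q*(j+Q-1))" using QD by (simp add: field_simps)
  note A = d0_aux[OF Q0 Dn d0_poly[of N Q j]]
  show ?thesis unfolding mm_scaled[OF Q0] cc dd by (rule A)
qed


lemma basic_ineqs:
  fixes N Q j :: real
  assumes Q: "Q \<ge> 2" and j: "j \<ge> 0" and W: "j*(j+Q) < (Q-1)*(N-2)" and NQ: "N \<ge> Q"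
  defines "c \<equiv> N - 1 - (N-2+j)/Q" and "d0 \<equiv> N - j*(N-1)/(Q*(j+Q-1))"
  shows "mm2 N Q - c*mm1 N Q > 0"
    and "mm3 N Q - c*mm2 N Q = d0*(mm2 N Q - c*mm1 N Q)"
    and "mm1 N Q - c \<ge> 0"
    and "0 < c" and "c \<le> d0 - 1" and "d0 \<le> N" and "N > 2"
proof -
  have Q0: "Q \<noteq> 0" using Q by simp
  have D0: "j+Q-1 > 0" using Q j by simp
  have QD: "Q*(j+Q-1) \<noteq> 0" using Q0 D0 by simp
  have "mm2 N Q - c*mm1 N Q = mm1 N Q * ((Q+j-1)/Q)"
    using Q0 unfolding mm1_def mm2_def c_def by (simp add: field_simps)
  moreover have "mm1 N Q > 0" using Q NQ unfolding mm1_def by simp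
  moreover have "(Q+j-1)/Q > 0" using Q j by simp
  ultimately show "mm2 N Q - c*mm1 N Q > 0" by (metis mult_pos_pos)
  show "mm3 N Q - c*mm2 N Q = d0*(mm2 N Q - c*mm1 N Q)"
  proof -
    have Dn: "j+Q-1 \<noteq> 0" using D0 by simp
    show ?thesis unfolding c_def d0_def by (rule d0_id[OF Q0 Dn])
  qed
  have "mm1 N Q - c = (Q+j-2)/Q" using Q0 unfolding mm1_def c_def by (simp add: field_simps)
  thus "mm1 N Q - c \<ge> 0" using Q j by simp
  have "j*(j+Q) \<ge> 0" using Q j by simp
  hence "(Q-1)*(N-2) > 0" using W by linarith
  hence N2: "N - 2 > 0" using zero_less_mult_pos[of "Q-1" "N-2"] Q by simp
  thus "N > 2" by simp
  have jN: "j < N - 2"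
  proof (rule ccontr)
    assume "\<not> j < N - 2"
    hence "j \<ge> N - 2" by simp
    hence "j*(j+Q) \<ge> (N-2)*(j+Q)" using Q j by (simp add: mult_right_mono)
    moreover have "(N-2)*(j+Q) \<ge> (N-2)*(Q-1)" using N2 j by (simp add: mult_left_mono)
    ultimately show False using W by (simp add: mult.commute)
  qed
  have "c = ((N-1)*Q - (N-2+j))/Q" using Q0 unfolding c_def by (simp add: field_simps)
  moreover have "(N-1)*Q - (N-2+j) > 0"
  proof -
    have "(N-1)*Q \<ge> (N-1)*2" using Q N2 by (intro mult_left_mono) simp_all
    moreover have "(N-1)*2 - (N-2+j) = N - j" by (simp add: algebra_simps)
    ultimately show ?thesis using jN by linarith
  qed
  ultimately show "0 < c" using Q by simp
  have "d0 - 1 - c = ((N-2)*(Q-1) + j*(j+Q-2))/(Q*(j+Q-1))"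
  proof -
    have pe: "(N*Q*(j+Q-1) - j*(N-1)) - Q*(j+Q-1) - ((N-1)*Q - (N-2+j))*(j+Q-1) = (N-2)*(Q-1) + j*(j+Q-2)"
      by algebra
    have dd: "d0 = (N*Q*(j+Q-1) - j*(N-1))/(Q*(j+Q-1))" unfolding d0_def using QD by (simp add: field_simps)
    have cc0: "c = ((N-1)*Q - (N-2+j))/Q" unfolding c_def using Q0 by (simp add: field_simps)
    have cc: "c = ((N-1)*Q - (N-2+j))*(j+Q-1)/(Q*(j+Q-1))"
      unfolding cc0 using D0 by (simp add: nonzero_mult_divide_mult_cancel_right)
    have one: "(1::real) = Q*(j+Q-1)/(Q*(j+Q-1))" using QD by simp
    have "d0 - 1 - c = (N*Q*(j+Q-1) - j*(N-1))/(Q*(j+Q-1)) - Q*(j+Q-1)/(Q*(j+Q-1)) - ((N-1)*Q - (N-2+j))*(j+Q-1)/(Q*(j+Q-1))"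
      using dd cc one by simp
    also have "\<dots> = ((N*Q*(j+Q-1) - j*(N-1)) - Q*(j+Q-1) - ((N-1)*Q - (N-2+j))*(j+Q-1))/(Q*(j+Q-1))"
      by (simp add: diff_divide_distrib)
    finally show ?thesis unfolding pe .
  qed
  moreover have "(N-2)*(Q-1) + j*(j+Q-2) \<ge> 0" using N2 Q j by simp
  moreover have "Q*(j+Q-1) > 0" using Q D0 by simp
  ultimately have "((N-2)*(Q-1) + j*(j+Q-2))/(Q*(j+Q-1)) \<ge> 0" "d0 - 1 - c = ((N-2)*(Q-1) + j*(j+Q-2))/(Q*(j+Q-1))" by simp_all
  thus "c \<le> d0 - 1" by linarith
  have "j*(N-1)/(Q*(j+Q-1)) \<ge> 0" using Q D0 N2 j by simp
  thus "d0 \<le> N" unfolding d0_def by simp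
qed

lemma backsub:
  fixes N Q g0 g1 g2 g3 :: real
  assumes Q0: "Q \<noteq> 0"
  shows "\<exists>c0 c1 c2 c3. \<forall>z. g3*z^3 + g2*z^2 + g1*z + g0 = c0 + c1*kk1 N Q z + c2*kk2 N Q z + c3*kk3 N Q z"
proof -
  define k10 where "k10 = (Q-1)*N"
  define k21 where "k21 = (Q^2-2*Q)/2 + N*Q - N*Q^2"
  define k20 where "k20 = (Q-1)^2*N*(N-1)/2"
  define k32 where "k32 = Q^2 - Q^3/2 + N*(Q^3-Q^2)/2"
  define k31 where "k31 = -Q + Q^2 - Q^3/3 + N*(3*Q/2 - 5*Q^2/2 + Q^3) + N^2*(-Q/2 + Q^2 - Q^3/2)"
  define k30 where "k30 = (Q-1)^3*N*(N-1)*(N-2)/6"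
  have K1: "\<And>z. kk1 N Q z = -Q*z + k10" unfolding kk1_def k10_def by (simp add: algebra_simps)
  have K2: "\<And>z. kk2 N Q z = Q^2/2*z^2 + k21*z + k20" unfolding kk2_poly k21_def k20_def by simp
  have K3: "\<And>z. kk3 N Q z = -(Q^3/6)*z^3 + k32*z^2 + k31*z + k30" unfolding kk3_poly k32_def k31_def k30_def by simp
  define c3 where "c3 = g3/(-(Q^3/6))"
  define c2 where "c2 = (g2 - c3*k32)/(Q^2/2)"
  define c1 where "c1 = (g1 - c3*k31 - c2*k21)/(-Q)"
  define c0 where "c0 = g0 - c3*k30 - c2*k20 - c1*k10"
  have a3: "c3*(-(Q^3/6)) = g3" unfolding c3_def using Q0 by simp
  have a2: "c2*(Q^2/2) + c3*k32 = g2" unfolding c2_def using Q0 by (simp add: field_simps)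
  have a1: "c1*(-Q) + c2*k21 + c3*k31 = g1" unfolding c1_def using Q0 by (simp add: field_simps)
  have "\<forall>z. g3*z^3 + g2*z^2 + g1*z + g0 = c0 + c1*kk1 N Q z + c2*kk2 N Q z + c3*kk3 N Q z"
  proof
    fix z
    have "c0 + c1*kk1 N Q z + c2*kk2 N Q z + c3*kk3 N Q z
       = (c3*(-(Q^3/6)))*z^3 + (c2*(Q^2/2) + c3*k32)*z^2 + (c1*(-Q) + c2*k21 + c3*k31)*z + (c0 + c1*k10 + c2*k20 + c3*k30)"
      unfolding K1 K2 K3 by (simp add: algebra_simps)
    also have "\<dots> = g3*z^3 + g2*z^2 + g1*z + g0" unfolding a3 a2 a1 c0_def by simp
    finally show "g3*z^3 + g2*z^2 + g1*z + g0 = c0 + c1*kk1 N Q z + c2*kk2 N Q z + c3*kk3 N Q z" by simp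
  qed
  thus ?thesis by blast
qed

theorem theorem4:
  fixes n q :: nat and d :: int and j e \<mu>1 \<mu>2 \<mu>3 :: real
  defines "S1 \<equiv> sqrt ((real q)^2 + 4 * (real q - 1) * (real n - 2))"
  defines "s \<equiv> 1 - 2 * real_of_int d / real n"
  defines "d0 \<equiv> real n - j * (real n - 1) / (real q * (j + real q - 1))"
  defines "f \<equiv> (\<lambda>t::real.
      (t + 1 + 2 * e / real n - 2 * j * (real n - 1) / (real n * real q * (j + real q - 1)))
    * (t + 1 + 2 * (e - 1) / real n - 2 * j * (real n - 1) / (real n * real q * (j + real q - 1)))
    * (t - s))"
  assumes hq: "2 \<le> q" and hn: "q \<le> n"
    and hj: "real_of_int d = real n - 1 - (real n - 2 + j) / real q"
    and hj0: "0 \<le> j" and hj1: "j < (S1 - real q) / 2"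
    and he: "0 < e" "e \<le> 1" "d0 + e \<in> \<int>"
    and hmu: "\<forall>l\<in>{1,2,3}.
        \<mu>1 * kraw n q l (real_of_int d) / rr n q l
      + \<mu>2 * kraw n q l (d0 + e - 1) / rr n q l
      + \<mu>3 * kraw n q l (d0 + e) / rr n q l = -1"
    and hlam: "\<forall>i\<in>{4..n}. 0 \<le> 1
        + \<mu>1 * kraw n q i (real_of_int d) / rr n q i
        + \<mu>2 * kraw n q i (d0 + e - 1) / rr n q i
        + \<mu>3 * kraw n q i (d0 + e) / rr n q i"
  shows "\<forall>(m::nat) (h::nat \<Rightarrow> real).
           m \<le> n \<and> 0 < h 0 \<and> (\<forall>i\<le>m. 0 \<le> h i)
           \<and> (\<forall>t\<in>Tn n. -1 \<le> t \<and> t \<le> s \<longrightarrow> (\<Sum>i\<le>m. h i * QQ n q i t) \<le> 0)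
           \<longrightarrow> f 1 / Qcoeff n q 3 f 0 \<le> (\<Sum>i\<le>m. h i * QQ n q i 1) / h 0"
proof (intro allI impI)
  fix m :: nat and h :: "nat \<Rightarrow> real"
  assume H: "m \<le> n \<and> 0 < h 0 \<and> (\<forall>i\<le>m. 0 \<le> h i)
           \<and> (\<forall>t\<in>Tn n. -1 \<le> t \<and> t \<le> s \<longrightarrow> (\<Sum>i\<le>m. h i * QQ n q i t) \<le> 0)"
  have q2: "2 \<le> real q" using hq by simp
  have nq: "real q \<le> real n" using hn by simp
  have Q0: "real q \<noteq> 0" using q2 by simp
  have W: "j*(j + real q) < (real q - 1)*(real n - 2)"
  proof -
    have A0: "(real q)^2 + 4 * (real q - 1) * (real n - 2) \<ge> 0"
    proof -
      have "(real q - 1) * (real n - 2) \<ge> 0" using q2 nq by simp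
      moreover have "(real q)^2 \<ge> 0" by simp
      moreover have "4 * (real q - 1) * (real n - 2) = 4 * ((real q - 1) * (real n - 2))" by simp
      ultimately show ?thesis by linarith
    qed
    have lt: "2*j + real q < S1" using hj1 by simp
    have "(2*j + real q)^2 < S1^2"
      using lt hj0 q2 by (intro power_strict_mono) auto
    also have "S1^2 = (real q)^2 + 4 * (real q - 1) * (real n - 2)"
      unfolding S1_def using A0 by simp
    finally show ?thesis by (simp add: algebra_simps power2_eq_square)
  qed
  note BI = basic_ineqs[OF q2 hj0 W nq]
  have cdef: "real_of_int d = real n - 1 - (real n - 2 + j)/real q" using hj by simp
  define cr where "cr = real_of_int d"
  define a where "a = d0 + e - 1"
  define b where "b = d0 + e"
  have ba: "b = a + 1" unfolding a_def b_def by simp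
  have V: "mm2 (real n) (real q) - cr * mm1 (real n) (real q) > 0" using BI(1) unfolding cr_def cdef d0_def .
  have U: "mm3 (real n) (real q) - cr * mm2 (real n) (real q) = d0 * (mm2 (real n) (real q) - cr * mm1 (real n) (real q))"
    using BI(2) unfolding cr_def cdef d0_def .
  have mc: "mm1 (real n) (real q) - cr \<ge> 0" using BI(3) unfolding cr_def cdef .
  have c0: "0 < cr" using BI(4) unfolding cr_def cdef .
  have cd0: "cr \<le> d0 - 1" using BI(5) unfolding cr_def cdef d0_def .
  have d0n: "d0 \<le> real n" using BI(6) unfolding d0_def .
  have n2: "real n > 2" using BI(7) .
  have n3: "3 \<le> n" using n2 by simp
  have npos: "real n \<noteq> 0" using n2 by simp
  have ca: "cr < a" using cd0 he(1) unfolding a_def by simp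
  have a0: "0 < a" using c0 ca by simp
  have sys: "\<And>l. l \<in> {1,2,3} \<Longrightarrow> \<mu>1 * kraw n q l cr + \<mu>2 * kraw n q l a + \<mu>3 * kraw n q l b = - kraw n q l 0"
  proof -
    fix l :: nat assume l: "l \<in> {1,2,3}"
    have rpos: "rr n q l > 0" using l n3 hq by (intro rr_pos) auto
    have "\<mu>1 * kraw n q l cr / rr n q l + \<mu>2 * kraw n q l a / rr n q l + \<mu>3 * kraw n q l b / rr n q l = -1"
      using hmu l unfolding cr_def a_def b_def by blast
    hence "(\<mu>1 * kraw n q l cr + \<mu>2 * kraw n q l a + \<mu>3 * kraw n q l b) / rr n q l = -1"
      by (simp add: add_divide_distrib)
    hence "\<mu>1 * kraw n q l cr + \<mu>2 * kraw n q l a + \<mu>3 * kraw n q l b = - rr n q l"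
      using rpos by (simp add: divide_eq_eq)
    thus "\<mu>1 * kraw n q l cr + \<mu>2 * kraw n q l a + \<mu>3 * kraw n q l b = - kraw n q l 0"
      by (simp add: kraw_at0)
  qed
  have l1: "(1::nat) \<in> {1,2,3}" and l2: "(2::nat) \<in> {1,2,3}" and l3: "(3::nat) \<in> {1,2,3}" by simp_all
  have s1: "\<mu>1 * kk1 (real n) (real q) cr + \<mu>2 * kk1 (real n) (real q) a + \<mu>3 * kk1 (real n) (real q) b = - kk1 (real n) (real q) 0"
    using sys[OF l1] unfolding kraw1 by simp
  have s2: "\<mu>1 * kk2 (real n) (real q) cr + \<mu>2 * kk2 (real n) (real q) a + \<mu>3 * kk2 (real n) (real q) b = - kk2 (real n) (real q) 0"
    using sys[OF l2] unfolding kraw2 by simp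
  have s3: "\<mu>1 * kk3 (real n) (real q) cr + \<mu>2 * kk3 (real n) (real q) a + \<mu>3 * kk3 (real n) (real q) b = - kk3 (real n) (real q) 0"
    using sys[OF l3] unfolding kraw3 by simp
  define S0 where "S0 = 1 + \<mu>1 + \<mu>2 + \<mu>3"
  note MO = moments[OF Q0 s1 s2 s3]
  note CQ = conseq[of \<mu>1 cr \<mu>2 a \<mu>3 b "mm1 (real n) (real q)" "mm2 (real n) (real q)" "mm3 (real n) (real q)"]
  have CQ1: "\<mu>1*(cr*(cr-a)*(cr-b)) = S0*(mm3 (real n) (real q) - (a+b)*mm2 (real n) (real q) + a*b*mm1 (real n) (real q))"
    using CQ(1) MO unfolding S0_def by blast
  have CQ2: "\<mu>2*(a*(a-cr)*(a-b)) = S0*(mm3 (real n) (real q) - (cr+b)*mm2 (real n) (real q) + cr*b*mm1 (real n) (real q))"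
    using CQ(2) MO unfolding S0_def by blast
  have CQ3: "\<mu>3*(b*(b-cr)*(b-a)) = S0*(mm3 (real n) (real q) - (cr+a)*mm2 (real n) (real q) + cr*a*mm1 (real n) (real q))"
    using CQ(3) MO unfolding S0_def by blast
  have CQ4: "-(cr*a*b) = S0*(mm3 (real n) (real q) - (a+b+cr)*mm2 (real n) (real q) + (a*b+b*cr+cr*a)*mm1 (real n) (real q) - cr*a*b)"
    using CQ(4) MO unfolding S0_def by blast
  have EFa: "EFg (mm1 (real n) (real q)) (mm2 (real n) (real q)) (mm3 (real n) (real q)) cr a < 0"
  proof -
    note E0 = EF_neg_k[OF q2 hj0 W nq, of 0, simplified]
    note E1 = EF_neg_k[OF q2 hj0 W nq, of 1, simplified]
    have cv: "EFg (mm1 (real n) (real q)) (mm2 (real n) (real q)) (mm3 (real n) (real q)) cr ((d0 - 1) + e)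
      = (1-e)*EFg (mm1 (real n) (real q)) (mm2 (real n) (real q)) (mm3 (real n) (real q)) cr (d0 - 1)
        + e*EFg (mm1 (real n) (real q)) (mm2 (real n) (real q)) (mm3 (real n) (real q)) cr (d0 - 1 + 1)
        - (mm1 (real n) (real q) - cr)*e*(1-e)" by (rule EF_convex)
    have n0: "EFg (mm1 (real n) (real q)) (mm2 (real n) (real q)) (mm3 (real n) (real q)) cr (d0 - 1) < 0"
      using E1 unfolding cr_def cdef d0_def .
    have n1: "EFg (mm1 (real n) (real q)) (mm2 (real n) (real q)) (mm3 (real n) (real q)) cr (d0 - 1 + 1) < 0"
      using E0 unfolding cr_def cdef d0_def by simp
    have t1: "(1-e)*EFg (mm1 (real n) (real q)) (mm2 (real n) (real q)) (mm3 (real n) (real q)) cr (d0 - 1) \<le> 0"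
      using n0 he(2) by (intro mult_nonneg_nonpos) auto
    have t2: "e*EFg (mm1 (real n) (real q)) (mm2 (real n) (real q)) (mm3 (real n) (real q)) cr (d0 - 1 + 1) < 0"
      using n1 he(1) by (intro mult_pos_neg) auto
    have t3: "(mm1 (real n) (real q) - cr)*e*(1-e) \<ge> 0" using mc he(1,2) by simp
    have aeq: "a = (d0 - 1) + e" unfolding a_def by simp
    show ?thesis unfolding aeq cv using t1 t2 t3 by linarith
  qed
  have S0pos: "S0 > 0"
  proof -
    have "EFg (mm1 (real n) (real q)) (mm2 (real n) (real q)) (mm3 (real n) (real q)) cr a
       = mm3 (real n) (real q) - (a+b+cr)*mm2 (real n) (real q) + (a*b+b*cr+cr*a)*mm1 (real n) (real q) - cr*a*b"
      unfolding EFg_def ba by (simp add: algebra_simps)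
    hence eq: "-(cr*a*b) = S0 * EFg (mm1 (real n) (real q)) (mm2 (real n) (real q)) (mm3 (real n) (real q)) cr a"
      using CQ4 by simp
    have "cr*a*b > 0" using c0 a0 ba by simp
    hence "S0 * EFg (mm1 (real n) (real q)) (mm2 (real n) (real q)) (mm3 (real n) (real q)) cr a < 0" using eq by linarith
    thus ?thesis using EFa by (simp add: mult_less_0_iff)
  qed
  have mu1: "\<mu>1 \<ge> 0"
  proof -
    have "mm3 (real n) (real q) - (2*a+1)*mm2 (real n) (real q) + a*(a+1)*mm1 (real n) (real q) \<ge> 0"
      by (rule Ec_nonneg[OF q2 nq])
    moreover have "mm3 (real n) (real q) - (a+b)*mm2 (real n) (real q) + a*b*mm1 (real n) (real q)
       = mm3 (real n) (real q) - (2*a+1)*mm2 (real n) (real q) + a*(a+1)*mm1 (real n) (real q)"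
      unfolding ba by (simp add: algebra_simps)
    ultimately have "S0*(mm3 (real n) (real q) - (a+b)*mm2 (real n) (real q) + a*b*mm1 (real n) (real q)) \<ge> 0"
      using S0pos by simp
    moreover have "cr*(cr-a)*(cr-b) > 0"
    proof -
      have "(cr-a)*(cr-b) > 0" using ca ba by (intro mult_neg_neg) auto
      thus ?thesis using c0 by (simp add: mult.assoc)
    qed
    ultimately show ?thesis using CQ1 by (metis zero_le_mult_iff not_le less_imp_le order.asym)
  qed
  have mu2: "\<mu>2 \<ge> 0"
  proof -
    have "mm3 (real n) (real q) - (cr+b)*mm2 (real n) (real q) + cr*b*mm1 (real n) (real q)
        = (d0 - b) * (mm2 (real n) (real q) - cr * mm1 (real n) (real q))"
      using U by (simp add: algebra_simps)
    also have "d0 - b = -e" unfolding b_def by simp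
    finally have "S0*(mm3 (real n) (real q) - (cr+b)*mm2 (real n) (real q) + cr*b*mm1 (real n) (real q)) \<le> 0"
      using S0pos V he(1) by (simp add: mult_le_0_iff)
    moreover have "a*(a-cr)*(a-b) < 0"
    proof -
      have "a*(a-cr) > 0" using a0 ca by simp
      thus ?thesis using ba by (simp add: mult_pos_neg)
    qed
    ultimately show ?thesis using CQ2 by (metis mult_le_0_iff not_le less_imp_le order.asym)
  qed
  have mu3eq: "\<mu>3*(b*(b-cr)) = S0 * ((1-e) * (mm2 (real n) (real q) - cr * mm1 (real n) (real q)))"
  proof -
    have "mm3 (real n) (real q) - (cr+a)*mm2 (real n) (real q) + cr*a*mm1 (real n) (real q)
        = (d0 - a) * (mm2 (real n) (real q) - cr * mm1 (real n) (real q))"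
      using U by (simp add: algebra_simps)
    also have "d0 - a = 1 - e" unfolding a_def by simp
    finally show ?thesis using CQ3 ba by simp
  qed
  have bpos: "b*(b-cr) > 0" using c0 ca ba by (intro mult_pos_pos) auto
  have mu3: "\<mu>3 \<ge> 0"
  proof -
    have "S0 * ((1-e) * (mm2 (real n) (real q) - cr * mm1 (real n) (real q))) \<ge> 0"
      using S0pos V he(2) by simp
    thus ?thesis using mu3eq bpos by (metis zero_le_mult_iff not_le less_imp_le order.asym)
  qed
  have mu3z: "e = 1 \<Longrightarrow> \<mu>3 = 0" using mu3eq bpos by auto
  obtain B :: int where B: "b = of_int B" using he(3) unfolding b_def by (auto elim: Ints_cases)
  have aB: "a = of_int (B - 1)" using B ba by simp
  define tz where "tz z = 1 - 2*z/real n" for z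
  have tzinv: "\<And>z. real n * (1 - tz z)/2 = z" unfolding tz_def using npos by (simp add: field_simps)
  have QQtz: "\<And>i z. QQ n q i (tz z) = kraw n q i z / rr n q i" unfolding QQ_def tzinv by simp
  have QQ1: "\<And>i. i \<le> n \<Longrightarrow> QQ n q i 1 = 1"
  proof -
    fix i assume "i \<le> n"
    hence "rr n q i > 0" using hq by (intro rr_pos) auto
    thus "QQ n q i 1 = 1" unfolding QQ_def by (simp add: kraw_at0)
  qed
  define lam where "lam i = 1 + \<mu>1 * kraw n q i cr / rr n q i + \<mu>2 * kraw n q i a / rr n q i + \<mu>3 * kraw n q i b / rr n q i" for i
  have lam0: "lam 0 = S0" by (simp add: lam_def kraw_0 rr_0 S0_def)
  have lam123: "\<And>i. i \<in> {1,2,3} \<Longrightarrow> lam i = 0"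
  proof -
    fix i :: nat assume "i \<in> {1,2,3}"
    hence "\<mu>1 * kraw n q i cr / rr n q i + \<mu>2 * kraw n q i a / rr n q i + \<mu>3 * kraw n q i b / rr n q i = -1"
      using hmu unfolding cr_def a_def b_def by blast
    thus "lam i = 0" unfolding lam_def by linarith
  qed
  have lamnn: "\<And>i. 1 \<le> i \<Longrightarrow> i \<le> n \<Longrightarrow> lam i \<ge> 0"
  proof -
    fix i :: nat assume i: "1 \<le> i" "i \<le> n"
    show "lam i \<ge> 0"
    proof (cases "i \<le> 3")
      case True
      hence "i \<in> {1,2,3}" using i by auto
      thus ?thesis using lam123 by simp
    next
      case False
      hence "i \<in> {4..n}" using i by auto
      thus ?thesis using hlam unfolding lam_def cr_def a_def b_def by blast
    qed
  qed
  have key: "\<And>fs m. m \<le> n \<Longrightarrow> (\<Sum>i\<le>m. fs i * QQ n q i 1) + \<mu>1*(\<Sum>i\<le>m. fs i * QQ n q i (tz cr))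
      + \<mu>2*(\<Sum>i\<le>m. fs i * QQ n q i (tz a)) + \<mu>3*(\<Sum>i\<le>m. fs i * QQ n q i (tz b)) = (\<Sum>i\<le>m. fs i * lam i)"
  proof -
    fix fs :: "nat \<Rightarrow> real" and m :: nat assume m: "m \<le> n"
    have "(\<Sum>i\<le>m. fs i * lam i) = (\<Sum>i\<le>m. fs i * QQ n q i 1 + \<mu>1*(fs i * QQ n q i (tz cr))
      + \<mu>2*(fs i * QQ n q i (tz a)) + \<mu>3*(fs i * QQ n q i (tz b)))"
    proof (rule sum.cong)
      fix i assume "i \<in> {..m}"
      hence "QQ n q i 1 = 1" using m QQ1 by simp
      thus "fs i * lam i = fs i * QQ n q i 1 + \<mu>1*(fs i * QQ n q i (tz cr))
      + \<mu>2*(fs i * QQ n q i (tz a)) + \<mu>3*(fs i * QQ n q i (tz b))"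
        unfolding lam_def QQtz by (simp add: algebra_simps)
    qed simp
    thus "(\<Sum>i\<le>m. fs i * QQ n q i 1) + \<mu>1*(\<Sum>i\<le>m. fs i * QQ n q i (tz cr))
      + \<mu>2*(\<Sum>i\<le>m. fs i * QQ n q i (tz a)) + \<mu>3*(\<Sum>i\<le>m. fs i * QQ n q i (tz b)) = (\<Sum>i\<le>m. fs i * lam i)"
      by (simp add: sum.distrib sum_distrib_left)
  qed
  have Dq: "j + real q - 1 \<noteq> 0" using hj0 q2 by simp
  have Dq2: "real q * (j + real q - 1) \<noteq> 0" "real n * real q * (j + real q - 1) \<noteq> 0" using Dq Q0 npos by simp_all
  have dd: "2*d0/real n = 2 - 2 * j * (real n - 1) / (real n * real q * (j + real q - 1))"
  proof -
    have "2*d0/real n = 2*real n/real n - 2*(j*(real n-1)/(real q*(j+real q-1)))/real n"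
      unfolding d0_def by (simp add: diff_divide_distrib right_diff_distrib)
    also have "2*real n/real n = 2" using npos by simp
    also have "2*(j*(real n-1)/(real q*(j+real q-1)))/real n = 2 * j * (real n - 1) / (real n * real q * (j + real q - 1))"
      by (simp add: mult.commute mult.left_commute)
    finally show ?thesis .
  qed
  have tb: "\<And>w. 2*(d0+w)/real n = 2*d0/real n + 2*w/real n" by (simp add: add_divide_distrib ring_distribs)
  have fac1: "\<And>t. t + 1 + 2 * e / real n - 2 * j * (real n - 1) / (real n * real q * (j + real q - 1)) = t - tz b"
    unfolding tz_def b_def tb using dd by linarith
  have fac2: "\<And>t. t + 1 + 2 * (e - 1) / real n - 2 * j * (real n - 1) / (real n * real q * (j + real q - 1)) = t - tz a"
  proof -
    fix t
    have "a = d0 + (e - 1)" unfolding a_def by simp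
    thus "t + 1 + 2 * (e - 1) / real n - 2 * j * (real n - 1) / (real n * real q * (j + real q - 1)) = t - tz a"
      unfolding tz_def tb using dd by (simp only: tb)
  qed
  have fac3: "\<And>t. t - s = t - tz cr" unfolding tz_def s_def cr_def by simp
  have froot: "\<And>t. f t = (t - tz b)*(t - tz a)*(t - tz cr)"
    unfolding f_def fac1 fac2 fac3 by simp
  have omtz: "\<And>z. 1 - tz z = 2*z/real n" unfolding tz_def by simp
  have f1pos: "f 1 > 0"
  proof -
    have "f 1 = (2*b/real n)*(2*a/real n)*(2*cr/real n)" unfolding froot omtz by simp
    moreover have "2*b/real n > 0" "2*a/real n > 0" "2*cr/real n > 0" using a0 c0 ba n2 by simp_all
    ultimately show ?thesis by (metis mult_pos_pos)
  qed
  have uniq: "\<And>fs. (\<forall>t. f t = (\<Sum>i\<le>3. fs i * QQ n q i t)) \<Longrightarrow> fs 0 = f 1 / S0"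
  proof -
    fix fs :: "nat \<Rightarrow> real" assume rep: "\<forall>t. f t = (\<Sum>i\<le>3. fs i * QQ n q i t)"
    have "f 1 + \<mu>1 * f (tz cr) + \<mu>2 * f (tz a) + \<mu>3 * f (tz b) = (\<Sum>i\<le>3. fs i * lam i)"
      using key[OF n3, of fs] rep by simp
    also have "\<dots> = fs 0 * S0" using lam123 lam0 by (simp add: numeral_3_eq_3 atMost_Suc)
    finally have "f 1 = fs 0 * S0" unfolding froot by simp
    thus "fs 0 = f 1 / S0" using S0pos by simp
  qed
  have Qc: "Qcoeff n q 3 f 0 = f 1 / S0"
    unfolding Qcoeff_def
  proof (rule the_equality)
    define kap where "kap = (-2/real n)^3"
    obtain c0 c1 c2 c3 where cc: "\<forall>z. kap*z^3 + (-kap*(a+b+cr))*z^2 + (kap*(a*b+b*cr+cr*a))*z + (-kap*(a*b*cr))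
       = c0 + c1*kk1 (real n) (real q) z + c2*kk2 (real n) (real q) z + c3*kk3 (real n) (real q) z"
      using backsub[OF Q0] by blast
    define fs where "fs i = (if i = 0 then c0 else if i = 1 then c1 * rr n q 1 else if i = 2 then c2 * rr n q 2 else c3 * rr n q 3)" for i :: nat
    have rp: "\<And>i. i \<in> {1,2,3} \<Longrightarrow> rr n q i \<noteq> 0"
    proof -
      fix i :: nat assume "i \<in> {1,2,3}"
      hence "rr n q i > 0" using n3 hq by (intro rr_pos) auto
      thus "rr n q i \<noteq> 0" by simp
    qed
    have rep: "\<forall>t. f t = (\<Sum>i\<le>3. fs i * QQ n q i t)"
    proof
      fix t
      define z where "z = real n * (1 - t)/2"
      have tt: "t = tz z" unfolding z_def tz_def using npos by (simp add: field_simps)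
      have "(\<Sum>i\<le>3. fs i * QQ n q i t) = fs 0 * QQ n q 0 t + fs 1 * QQ n q 1 t + fs 2 * QQ n q 2 t + fs 3 * QQ n q 3 t"
        by (simp add: numeral_3_eq_3 numeral_2_eq_2 atMost_Suc)
      also have "\<dots> = c0 + c1*kk1 (real n) (real q) z + c2*kk2 (real n) (real q) z + c3*kk3 (real n) (real q) z"
        unfolding tt QQtz using rp[of 1] rp[of 2] rp[of 3]
        by (simp add: fs_def kraw_0 rr_0 kraw1 kraw1[simplified] kraw2 kraw3)
      also have "\<dots> = kap*z^3 + (-kap*(a+b+cr))*z^2 + (kap*(a*b+b*cr+cr*a))*z + (-kap*(a*b*cr))"
        using cc by simp
      also have "\<dots> = f t"
      proof -
        have d: "\<And>w. tz z - tz w = (-2/real n)*(z - w)" unfolding tz_def by (simp add: diff_divide_distrib add_divide_distrib algebra_simps)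
        define w where "w = -2/real n"
        have kw: "kap = w^3" unfolding kap_def w_def ..
        show ?thesis unfolding froot tt d w_def[symmetric] kw by (simp add: algebra_simps power3_eq_cube power2_eq_square)
      qed
      finally show "f t = (\<Sum>i\<le>3. fs i * QQ n q i t)" by simp
    qed
    show "\<exists>fs. fs 0 = f 1 / S0 \<and> (\<forall>t. f t = (\<Sum>i\<le>3. fs i * QQ n q i t))"
      using rep uniq by blast
  next
    fix c assume "\<exists>fs. fs 0 = c \<and> (\<forall>t. f t = (\<Sum>i\<le>3. fs i * QQ n q i t))"
    thus "c = f 1 / S0" using uniq by blast
  qed
  have mn: "m \<le> n" and h0: "0 < h 0" and hnn: "\<forall>i\<le>m. 0 \<le> h i"
    and hneg: "\<forall>t\<in>Tn n. -1 \<le> t \<and> t \<le> s \<longrightarrow> (\<Sum>i\<le>m. h i * QQ n q i t) \<le> 0" using H by auto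
  have inTn: "\<And>Z::int. 0 \<le> Z \<Longrightarrow> Z \<le> int n \<Longrightarrow> tz (of_int Z) \<in> Tn n"
  proof -
    fix Z :: int assume Z: "0 \<le> Z" "Z \<le> int n"
    have r: "real (nat (int n - Z)) = real n - of_int Z" using Z by simp
    have "tz (of_int Z) = -1 + 2 * real (nat (int n - Z)) / real n"
      unfolding r tz_def using npos by (simp add: field_simps)
    moreover have "nat (int n - Z) \<le> n" using Z by simp
    ultimately show "tz (of_int Z) \<in> Tn n" unfolding Tn_def by blast
  qed
  have tzge: "\<And>z. z \<le> real n \<Longrightarrow> -1 \<le> tz z"
  proof -
    fix z assume "z \<le> real n"
    hence "2*z/real n \<le> 2" using n2 by (simp add: divide_le_eq)
    thus "-1 \<le> tz z" unfolding tz_def by simp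
  qed
  have tzle: "\<And>z. cr \<le> z \<Longrightarrow> tz z \<le> s"
  proof -
    fix z assume "cr \<le> z"
    hence "2*cr/real n \<le> 2*z/real n" using n2 by (simp add: divide_right_mono)
    thus "tz z \<le> s" unfolding tz_def s_def cr_def by simp
  qed
  have an: "a \<le> real n" using d0n he(2) unfolding a_def by simp
  have Hc: "(\<Sum>i\<le>m. h i * QQ n q i (tz cr)) \<le> 0"
  proof -
    have "0 \<le> d" using c0 unfolding cr_def by simp
    moreover have "d \<le> int n" using ca an unfolding cr_def by linarith
    ultimately have "tz cr \<in> Tn n" using inTn unfolding cr_def by blast
    moreover have "-1 \<le> tz cr" using ca an by (intro tzge) simp
    moreover have "tz cr \<le> s" by (intro tzle) simp
    ultimately show ?thesis using hneg by blast
  qed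
  have Ha: "(\<Sum>i\<le>m. h i * QQ n q i (tz a)) \<le> 0"
  proof -
    have "0 \<le> B - 1" using a0 aB by simp
    moreover have "B - 1 \<le> int n" using an aB by linarith
    ultimately have "tz a \<in> Tn n" using inTn aB by blast
    moreover have "-1 \<le> tz a" using an by (intro tzge)
    moreover have "tz a \<le> s" using ca by (intro tzle) simp
    ultimately show ?thesis using hneg by blast
  qed
  have Hb: "\<mu>3 * (\<Sum>i\<le>m. h i * QQ n q i (tz b)) \<le> 0"
  proof (cases "B \<le> int n")
    case True
    have "0 \<le> B" using a0 ba B by simp
    hence "tz b \<in> Tn n" using inTn B True by blast
    moreover have "-1 \<le> tz b" using True B by (intro tzge) simp
    moreover have "tz b \<le> s" using ca ba by (intro tzle) simp
    ultimately have "(\<Sum>i\<le>m. h i * QQ n q i (tz b)) \<le> 0" using hneg by blast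
    thus ?thesis using mu3 by (simp add: mult_nonneg_nonpos)
  next
    case False
    hence "B \<ge> int n + 1" by simp
    hence "b \<ge> real n + 1" using B by simp
    hence "e = 1" using d0n he(2) unfolding b_def by simp
    thus ?thesis using mu3z by simp
  qed
  have tot: "(\<Sum>i\<le>m. h i * lam i) \<ge> h 0 * S0"
  proof -
    have "(\<Sum>i\<le>m. h i * lam i) \<ge> (\<Sum>i\<le>m. (if i = 0 then h 0 * S0 else 0))"
    proof (rule sum_mono)
      fix i assume i: "i \<in> {..m}"
      show "(if i = 0 then h 0 * S0 else 0) \<le> h i * lam i"
      proof (cases "i = 0")
        case True thus ?thesis using lam0 by simp
      next
        case False
        hence "lam i \<ge> 0" using lamnn i mn by simp
        moreover have "h i \<ge> 0" using hnn i by simp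
        ultimately show ?thesis using False by simp
      qed
    qed
    also have "(\<Sum>i\<le>m. (if i = 0 then h 0 * S0 else 0)) = h 0 * S0" by (simp add: sum.delta)
    finally show ?thesis .
  qed
  have m1h: "\<mu>1 * (\<Sum>i\<le>m. h i * QQ n q i (tz cr)) \<le> 0" using mu1 Hc by (simp add: mult_nonneg_nonpos)
  have m2h: "\<mu>2 * (\<Sum>i\<le>m. h i * QQ n q i (tz a)) \<le> 0" using mu2 Ha by (simp add: mult_nonneg_nonpos)
  have "(\<Sum>i\<le>m. h i * QQ n q i 1) \<ge> h 0 * S0"
    using key[OF mn, of h] tot m1h m2h Hb by linarith
  hence "S0 \<le> (\<Sum>i\<le>m. h i * QQ n q i 1) / h 0" using h0 by (simp add: le_divide_eq mult.commute)
  moreover have "f 1 / Qcoeff n q 3 f 0 = S0" unfolding Qc using f1pos S0pos by simp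
  ultimately show "f 1 / Qcoeff n q 3 f 0 \<le> (\<Sum>i\<le>m. h i * QQ n q i 1) / h 0" by simp
qed

end
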